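(* In the two-period model with a transparent bailout and $p_0<p_g<1-S$, in any delayed stimulation equilibrium we have $\hat\theta=\theta_0$, $\hat\theta_g\in[\theta_0,p_g+S)$ and $\theta_2=p_g+S$. Moreover: (i) types $\theta\le\theta_0$ sell in both periods, and a positive (possibly full) measure of them accept the bailout; (ii) among types $\theta\le\theta_0$, those that sell to the market at $t=1$ (if any) receive price $p_0$ at $t=1$ and price $p_g$ from the $t=2$ market, while those that accept the bailout sell at price $p_0$ at $t=2$; both groups have the same average asset value $\mathbb{E}[\theta\mid\theta\le\theta_0]=p_0$; (iii) types $\theta\in(\theta_0,\hat\theta_g]$ sell only at $t=1$, to the government at $p_g$; (iv) types $\theta\in(\hat\theta_g,p_g+S]$ sell only at $t=2$, at price $p_g$, and types $\theta>p_g+S$ never sell.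
   Context: Two-period model: a continuum of firms with privately known type $\theta\in[0,1]$, cdf $F$, density $f>0$, $f$ strictly log-concave, and for every $b\in(0,1]$ the map $a\mapsto 2\mathbb{E}[\theta\mid a<\theta<b]-\mathbb{E}[\theta\mid\theta\le a]$ is increasing on $(0,b)$. A type-$\theta$ firm holds one unit of an asset worth $\theta$ in each of two periods $t=1,2$. In each period it has a project with cost $I>0$ and net return $S>0$ that can be funded only by selling that period's unit; selling that unit at price $p\ge I$ yields $p+S$ for that period, not selling yields $\theta$. A firm's total payoff is the sum of the two periods' payoffs (period-2 payoff weighted by $\delta<1$, and equilibria are considered in the limit $\delta\to1$). In each period competitive short-lived risk-neutral buyers make price offers (Bertrand; break even in expectation; indifferent buyers buy). At $t=1$ only, the government offers to buy one unit at price $p_g$; each firm then sells its $t=1$ unit to the government, to the market, or not at all. Sales to the market at $t=1$ are not observed by $t=2$ buyers. Transparent bailout: acceptance of the government offer is observed by $t=2$ buyers, who may make different offers to bailout recipients and non-recipients. Equilibrium means perfect Bayesian equilibrium. Laissez-faire: $\theta_0\in(0,1)$ uniquely solves $\theta_0-S=\mathbb{E}[\theta\mid\theta\le\theta_0]$, $p_0:=\mathbb{E}[\theta\mid\theta\le\theta_0]$, and $p_0\ge I$. Equilibrium structure: every equilibrium has cutoffs $0<\hat\theta\le\hat\theta_g\le\theta_2$ such that types $\theta\le\hat\theta$ sell in both periods, types in $(\hat\theta,\hat\theta_g]$ sell only at $t=1$ to the government, types in $(\hat\theta_g,\theta_2]$ sell only at $t=2$, and types above $\theta_2$ never sell. A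 short-lived stimulation equilibrium is an equilibrium with $\hat\theta_g=\theta_2$; a delayed stimulation equilibrium is one with $\hat\theta_g<\theta_2$. *)

theory Defs
  imports "HOL-Analysis.Analysis"
begin

text \<open>Types are distributed on [0,1] with density f.  mass f A is the probability
  of the event {theta in A}; cexp f A is the conditional expectation E[theta | theta in A].\<close>

definition mass :: "(real \<Rightarrow> real) \<Rightarrow> real set \<Rightarrow> real" where
  "mass f A = set_lebesgue_integral lborel (A \<inter> {0..1}) f"

definition cexp :: "(real \<Rightarrow> real) \<Rightarrow> real set \<Rightarrow> real" where
  "cexp f A = set_lebesgue_integral lborel (A \<inter> {0..1}) (\<lambda>x. x * f x) / mass f A"

definition strictly_concave_on :: "real set \<Rightarrow> (real \<Rightarrow> real) \<Rightarrow> bool" where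
  "strictly_concave_on S g \<longleftrightarrow> convex S \<and>
     (\<forall>x\<in>S. \<forall>y\<in>S. \<forall>u. x \<noteq> y \<and> 0 < u \<and> u < 1 \<longrightarrow>
        g (u * x + (1 - u) * y) > u * g x + (1 - u) * g y)"

definition strictly_log_concave_on :: "real set \<Rightarrow> (real \<Rightarrow> real) \<Rightarrow> bool" where
  "strictly_log_concave_on S f \<longleftrightarrow> (\<forall>x\<in>S. f x > 0) \<and> strictly_concave_on S (\<lambda>x. ln (f x))"

datatype act1 = Gov | Mkt | NoSale

text \<open>Value of selling a unit at price p: p + S if the project can be funded (p >= I), else p.\<close>
definition sale_val :: "real \<Rightarrow> real \<Rightarrow> real \<Rightarrow> real" where
  "sale_val I S p = (if I \<le> p then p + S else p)"

text \<open>Period-2 price faced by a firm, given its (observed) bailout status: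
  qg for bailout recipients, qn for non-recipients (market sales at t=1 are unobserved).\<close>
definition price2 :: "real \<Rightarrow> real \<Rightarrow> act1 \<Rightarrow> real" where
  "price2 qg qn a = (if a = Gov then qg else qn)"

definition flow1 :: "real \<Rightarrow> real \<Rightarrow> real \<Rightarrow> real \<Rightarrow> act1 \<Rightarrow> real \<Rightarrow> real" where
  "flow1 I S pg p1 a th = (case a of Gov \<Rightarrow> sale_val I S pg | Mkt \<Rightarrow> sale_val I S p1 | NoSale \<Rightarrow> th)"

definition cont :: "real \<Rightarrow> real \<Rightarrow> real \<Rightarrow> real \<Rightarrow> act1 \<Rightarrow> real \<Rightarrow> real" where
  "cont I S qg qn a th = max th (sale_val I S (price2 qg qn a))"

text \<open>Total (undiscounted, delta -> 1) payoff of type th under strategy (s1, s2).\<close>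
definition payoff :: "real \<Rightarrow> real \<Rightarrow> real \<Rightarrow> real \<Rightarrow> real \<Rightarrow> real \<Rightarrow>
    (real \<Rightarrow> act1) \<Rightarrow> (real \<Rightarrow> act1 \<Rightarrow> bool) \<Rightarrow> real \<Rightarrow> real" where
  "payoff I S pg p1 qg qn s1 s2 th =
     flow1 I S pg p1 (s1 th) th +
     (if s2 th (s1 th) then sale_val I S (price2 qg qn (s1 th)) else th)"

text \<open>Perfect Bayesian equilibrium with a transparent bailout (limit delta -> 1).
  s1 th : period-1 action of type th;  s2 th a : whether type th sells at t=2 after
  period-1 action a;  p1 : t=1 market price;  qg / qn : t=2 market prices offered to
  bailout recipients / non-recipients.  Conditions: measurable strategies; sequential
  optimality of every type at t=2 (after every own t=1 action) and at t=1; buyers break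
  even in every market with positive trade; and no buyer can profitably deviate by
  offering a higher price (Bertrand competition), where the deviating offer attracts the
  types that strictly gain from accepting it.\<close>
definition transparent_eq ::
  "(real \<Rightarrow> real) \<Rightarrow> real \<Rightarrow> real \<Rightarrow> real \<Rightarrow>
   (real \<Rightarrow> act1) \<Rightarrow> (real \<Rightarrow> act1 \<Rightarrow> bool) \<Rightarrow> real \<Rightarrow> real \<Rightarrow> real \<Rightarrow> bool" where
  "transparent_eq f I S pg s1 s2 p1 qg qn \<longleftrightarrow>
     (\<forall>a. {th. s1 th = a} \<in> sets lborel \<and> {th. s2 th a} \<in> sets lborel) \<and>
     \<comment> \<open>t=2 optimality, after every own t=1 action\<close>
     (\<forall>th\<in>{0..1}. \<forall>a.
        (s2 th a \<longrightarrow> th \<le> sale_val I S (price2 qg qn a)) \<and>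
        (\<not> s2 th a \<longrightarrow> sale_val I S (price2 qg qn a) \<le> th)) \<and>
     \<comment> \<open>t=1 optimality\<close>
     (\<forall>th\<in>{0..1}. \<forall>a.
        flow1 I S pg p1 a th + cont I S qg qn a th \<le> payoff I S pg p1 qg qn s1 s2 th) \<and>
     \<comment> \<open>break-even of buyers\<close>
     (mass f {th. s1 th = Mkt} > 0 \<longrightarrow> p1 = cexp f {th. s1 th = Mkt}) \<and>
     (mass f {th. s1 th = Gov \<and> s2 th Gov} > 0 \<longrightarrow> qg = cexp f {th. s1 th = Gov \<and> s2 th Gov}) \<and>
     (mass f {th. s1 th \<noteq> Gov \<and> s2 th (s1 th)} > 0 \<longrightarrow>
        qn = cexp f {th. s1 th \<noteq> Gov \<and> s2 th (s1 th)}) \<and>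
     \<comment> \<open>no profitable upward price deviation (Bertrand)\<close>
     (\<forall>p'>p1. set_lebesgue_integral lborel
         ({th. sale_val I S p' + cont I S qg qn Mkt th > payoff I S pg p1 qg qn s1 s2 th} \<inter> {0..1})
         (\<lambda>x. (x - p') * f x) \<le> 0) \<and>
     (\<forall>p'>qg. set_lebesgue_integral lborel
         ({th. s1 th = Gov \<and> sale_val I S p' > th} \<inter> {0..1}) (\<lambda>x. (x - p') * f x) \<le> 0) \<and>
     (\<forall>p'>qn. set_lebesgue_integral lborel
         ({th. s1 th \<noteq> Gov \<and> sale_val I S p' > th} \<inter> {0..1}) (\<lambda>x. (x - p') * f x) \<le> 0)"

definition sells1 :: "(real \<Rightarrow> act1) \<Rightarrow> real \<Rightarrow> bool" where
  "sells1 s1 th \<longleftrightarrow> s1 th \<noteq> NoSale"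

definition sells2 :: "(real \<Rightarrow> act1) \<Rightarrow> (real \<Rightarrow> act1 \<Rightarrow> bool) \<Rightarrow> real \<Rightarrow> bool" where
  "sells2 s1 s2 th \<longleftrightarrow> s2 th (s1 th)"

definition has_cutoffs ::
  "(real \<Rightarrow> act1) \<Rightarrow> (real \<Rightarrow> act1 \<Rightarrow> bool) \<Rightarrow> real \<Rightarrow> real \<Rightarrow> real \<Rightarrow> bool" where
  "has_cutoffs s1 s2 th_hat th_g th2 \<longleftrightarrow>
     0 < th_hat \<and> th_hat \<le> th_g \<and> th_g \<le> th2 \<and>
     (\<forall>th\<in>{0..1}.
        (th \<le> th_hat \<longrightarrow> sells1 s1 th \<and> sells2 s1 s2 th) \<and>
        (th_hat < th \<and> th \<le> th_g \<longrightarrow> s1 th = Gov \<and> \<not> sells2 s1 s2 th) \<and>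
        (th_g < th \<and> th \<le> th2 \<longrightarrow> \<not> sells1 s1 th \<and> sells2 s1 s2 th) \<and>
        (th2 < th \<longrightarrow> \<not> sells1 s1 th \<and> \<not> sells2 s1 s2 th))"

end

theory Submission
  imports Defs
begin


definition num :: "(real \<Rightarrow> real) \<Rightarrow> real set \<Rightarrow> real" where
  "num f A = set_lebesgue_integral lborel (A \<inter> {0..1}) (\<lambda>x. x * f x)"

locale dens =
  fixes f :: "real \<Rightarrow> real"
  assumes meas: "f \<in> borel_measurable lborel"
    and int: "set_integrable lborel {0..1} f"
    and pos: "\<forall>x\<in>{0..1}. f x > 0"
begin

lemma intf: "A \<in> sets lborel \<Longrightarrow> set_integrable lborel (A \<inter> {0..1}) f"
  by (rule set_integrable_subset[OF int]) auto

lemma intxf01: "set_integrable lborel {0..1} (\<lambda>x. x * f x)"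
proof (rule set_integrable_bound[OF int])
  show "set_borel_measurable lborel {0..1} (\<lambda>x. x * f x)"
    unfolding set_borel_measurable_def using meas by measurable
  show "AE x\<in>{0..1} in lborel. norm (x * f x) \<le> norm (f x)"
    by (auto simp: abs_mult intro!: mult_left_le_one_le)
qed

lemma intxf: "A \<in> sets lborel \<Longrightarrow> set_integrable lborel (A \<inter> {0..1}) (\<lambda>x. x * f x)"
  by (rule set_integrable_subset[OF intxf01]) auto

lemma intlin: "A \<in> sets lborel \<Longrightarrow> set_integrable lborel (A \<inter> {0..1}) (\<lambda>x. (x - p) * f x)"
proof -
  assume A: "A \<in> sets lborel"
  have "set_integrable lborel (A \<inter> {0..1}) (\<lambda>x. x * f x - p * f x)"
    using intxf[OF A] set_integrable_mult_right[OF intf[OF A], of p]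
    by (intro set_integral_diff) auto
  thus ?thesis by (simp add: left_diff_distrib)
qed

lemma integral_lin: "A \<in> sets lborel \<Longrightarrow>
   set_lebesgue_integral lborel (A \<inter> {0..1}) (\<lambda>x. (x - p) * f x) = num f A - p * mass f A"
proof -
  assume A: "A \<in> sets lborel"
  have "set_lebesgue_integral lborel (A \<inter> {0..1}) (\<lambda>x. (x - p) * f x)
      = set_lebesgue_integral lborel (A \<inter> {0..1}) (\<lambda>x. x * f x - p * f x)"
    by (simp add: left_diff_distrib)
  also have "\<dots> = num f A - p * mass f A"
    using intxf[OF A] set_integrable_mult_right[OF intf[OF A], of p]
    by (subst set_integral_diff(2)) (auto simp: num_def mass_def set_integral_mult_right)
  finally show ?thesis .
qed

lemma nonneg_integral:
  assumes X: "X \<in> sets lborel" "X \<subseteq> {0..1}" and hi: "set_integrable lborel X (\<lambda>x. h x * f x)"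
    and h: "\<forall>x\<in>X. h x \<ge> 0"
  shows "set_lebesgue_integral lborel X (\<lambda>x. h x * f x) \<ge> 0"
    and "set_lebesgue_integral lborel X (\<lambda>x. h x * f x) = 0 \<Longrightarrow> AE x in lborel. x \<in> X \<longrightarrow> h x = 0"
proof -
  have nn: "\<And>x. 0 \<le> indicator X x *\<^sub>R (h x * f x)"
  proof -
    fix x show "0 \<le> indicator X x *\<^sub>R (h x * f x)"
    proof (cases "x \<in> X")
      case True
      hence "h x \<ge> 0" "f x > 0" using h pos X(2) by auto
      thus ?thesis using True by simp
    qed simp
  qed
  show "set_lebesgue_integral lborel X (\<lambda>x. h x * f x) \<ge> 0"
    unfolding set_lebesgue_integral_def using nn by (intro integral_nonneg_AE) auto
  assume z: "set_lebesgue_integral lborel X (\<lambda>x. h x * f x) = 0"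
  have "AE x in lborel. indicator X x *\<^sub>R (h x * f x) = 0"
    using z hi nn unfolding set_lebesgue_integral_def set_integrable_def
    by (subst integral_nonneg_eq_0_iff_AE[symmetric]) auto
  thus "AE x in lborel. x \<in> X \<longrightarrow> h x = 0"
    by eventually_elim (use pos X(2) in \<open>fastforce simp: indicator_def\<close>)
qed

lemma mass_nonneg: "A \<in> sets lborel \<Longrightarrow> 0 \<le> mass f A"
  using nonneg_integral(1)[of "A \<inter> {0..1}" "\<lambda>_. 1"] intf by (auto simp: mass_def)

lemma mass_zero_AE: "A \<in> sets lborel \<Longrightarrow> mass f A = 0 \<Longrightarrow> AE x in lborel. x \<notin> A \<inter> {0..1}"
  using nonneg_integral(2)[of "A \<inter> {0..1}" "\<lambda>_. 1"] intf by (auto simp: mass_def)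

lemma null_integral: "AE x in lborel. x \<notin> X \<Longrightarrow> set_lebesgue_integral lborel X g = 0"
  unfolding set_lebesgue_integral_def
  by (rule integral_eq_zero_AE) (auto elim!: eventually_mono simp: indicator_def)

lemma mass_pos_interval:
  assumes "0 \<le> u" "u < v" "v \<le> 1" "{u<..<v} \<subseteq> A" "A \<in> sets lborel"
  shows "0 < mass f A"
proof (rule ccontr)
  assume "\<not> 0 < mass f A"
  hence "mass f A = 0" using mass_nonneg[OF assms(5)] by auto
  from mass_zero_AE[OF assms(5) this]
  have "AE x in lborel. x \<notin> {u<..<v}"
    by eventually_elim (use assms in auto)
  hence "emeasure lborel {u<..<v} = 0"
    by (subst (asm) AE_iff_measurable[of "{u<..<v}"]) auto
  thus False using assms by simp
qed

lemma exists_not_in: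
  assumes "0 \<le> u" "u < v" "v \<le> 1" "B \<in> sets lborel" "mass f B = 0"
  shows "\<exists>x. u < x \<and> x < v \<and> x \<notin> B"
  using mass_pos_interval[of u v B] assms by force

lemma cong01:
  assumes "A \<inter> {0..1} = B \<inter> {0..1}"
  shows "mass f A = mass f B" "num f A = num f B" "cexp f A = cexp f B"
  using assms by (auto simp: mass_def num_def cexp_def)

lemma cexp_num: "cexp f A = num f A / mass f A"
  by (simp add: cexp_def num_def)

lemma num_eq: "A \<in> sets lborel \<Longrightarrow> num f A = mass f A * cexp f A"
proof -
  assume A: "A \<in> sets lborel"
  show ?thesis
  proof (cases "mass f A = 0")
    case True
    then show ?thesis by (simp add: num_def null_integral[OF mass_zero_AE[OF A True]])
  qed (simp add: cexp_num)
qed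

lemma mass_Un:
  assumes "A \<in> sets lborel" "B \<in> sets lborel" "A \<inter> B = {}"
  shows "mass f (A \<union> B) = mass f A + mass f B" "num f (A \<union> B) = num f A + num f B"
proof -
  have e: "(A \<union> B) \<inter> {0..1} = (A \<inter> {0..1}) \<union> (B \<inter> {0..1})" by auto
  have d: "(A \<inter> {0..1}) \<inter> (B \<inter> {0..1}) = {}" using assms by auto
  show "mass f (A \<union> B) = mass f A + mass f B"
    unfolding mass_def e using set_integral_Un[OF d intf intf] assms by auto
  show "num f (A \<union> B) = num f A + num f B"
    unfolding num_def e using set_integral_Un[OF d intxf intxf] assms by auto
qed

lemma mass_mono: "A \<in> sets lborel \<Longrightarrow> B \<in> sets lborel \<Longrightarrow> A \<subseteq> B \<Longrightarrow> mass f A \<le> mass f B"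
proof -
  assume a: "A \<in> sets lborel" "B \<in> sets lborel" "A \<subseteq> B"
  have "B = A \<union> (B - A)" using a by auto
  hence "mass f B = mass f A + mass f (B - A)" using mass_Un[of A "B - A"] a by auto
  thus ?thesis using mass_nonneg[of "B - A"] a by auto
qed

lemma null_mod:
  assumes "A \<in> sets lborel" "B \<in> sets lborel" "A \<subseteq> B" "mass f (B - A) = 0"
  shows "mass f A = mass f B" "num f A = num f B" "cexp f A = cexp f B"
proof -
  have "B = A \<union> (B - A)" using assms by auto
  hence m: "mass f B = mass f A + mass f (B - A)" "num f B = num f A + num f (B - A)"
    using mass_Un[of A "B - A"] assms by auto
  have "B - A \<in> sets lborel" using assms by auto
  hence "num f (B - A) = 0" unfolding num_def
    using null_integral[OF mass_zero_AE[of "B - A"]] assms by auto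
  thus "mass f A = mass f B" "num f A = num f B" using m assms by auto
  thus "cexp f A = cexp f B" by (simp add: cexp_num)
qed

lemma cexp_lt:
  assumes A: "A \<in> sets lborel" and m: "0 < mass f A" and b: "\<forall>x\<in>A \<inter> {0..1}. x \<le> v"
  shows "cexp f A < v"
proof -
  let ?X = "A \<inter> {0..1}"
  have i: "set_integrable lborel ?X (\<lambda>x. (v - x) * f x)"
    using intlin[OF A, of v] set_integrable_mult_right[OF intlin[OF A, of v], of "-1"]
    by (simp add: algebra_simps)
  have eq: "set_lebesgue_integral lborel ?X (\<lambda>x. (v - x) * f x) = v * mass f A - num f A"
  proof -
    have "set_lebesgue_integral lborel ?X (\<lambda>x. (v - x) * f x)
       = set_lebesgue_integral lborel ?X (\<lambda>x. (-1) * ((x - v) * f x))"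
      by (simp add: algebra_simps)
    also have "\<dots> = (-1) * set_lebesgue_integral lborel ?X (\<lambda>x. ((x - v) * f x))"
      by (rule set_integral_mult_right)
    also have "\<dots> = - (num f A - v * mass f A)"
      using integral_lin[OF A, of v] by simp
    finally show ?thesis by simp
  qed
  have ge: "v * mass f A - num f A \<ge> 0"
    using nonneg_integral(1)[OF _ _ i] A b eq by auto
  have "v * mass f A - num f A \<noteq> 0"
  proof
    assume "v * mass f A - num f A = 0"
    hence "AE x in lborel. x \<in> ?X \<longrightarrow> v - x = 0"
      using nonneg_integral(2)[OF _ _ i] A b eq by auto
    hence "AE x in lborel. x \<notin> ?X"
      using AE_lborel_singleton[of v] by eventually_elim auto
    hence "mass f A = 0" unfolding mass_def by (rule null_integral)
    thus False using m by simp
  qed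
  hence "num f A < v * mass f A" using ge by simp
  thus ?thesis using m by (simp add: cexp_num pos_divide_less_eq mult.commute)
qed

lemma cexp_gt:
  assumes A: "A \<in> sets lborel" and m: "0 < mass f A" and b: "\<forall>x\<in>A \<inter> {0..1}. u \<le> x"
  shows "u < cexp f A"
proof -
  let ?X = "A \<inter> {0..1}"
  have i: "set_integrable lborel ?X (\<lambda>x. (x - u) * f x)" by (rule intlin[OF A])
  have eq: "set_lebesgue_integral lborel ?X (\<lambda>x. (x - u) * f x) = num f A - u * mass f A"
    by (rule integral_lin[OF A])
  have ge: "num f A - u * mass f A \<ge> 0"
    using nonneg_integral(1)[OF _ _ i] A b eq by auto
  have "num f A - u * mass f A \<noteq> 0"
  proof
    assume "num f A - u * mass f A = 0"
    hence "AE x in lborel. x \<in> ?X \<longrightarrow> x - u = 0"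
      using nonneg_integral(2)[OF _ _ i] A b eq by auto
    hence "AE x in lborel. x \<notin> ?X"
      using AE_lborel_singleton[of u] by eventually_elim auto
    hence "mass f A = 0" unfolding mass_def by (rule null_integral)
    thus False using m by simp
  qed
  hence "u * mass f A < num f A" using ge by simp
  thus ?thesis using m by (simp add: cexp_num pos_less_divide_eq mult.commute)
qed

end

locale dens_lc = dens +
  assumes lc: "strictly_log_concave_on {0..1} f"
begin

lemma chord:
  assumes "0 \<le> a" "a < b" "b < c" "c \<le> 1"
  shows "(c - b) * ln (f a) + (b - a) * ln (f c) \<le> (c - a) * ln (f b)"
proof -
  let ?u = "(c - b) / (c - a)"
  have u: "0 < ?u" "?u < 1" using assms by auto
  have ne: "c - a \<noteq> 0" using assms by auto
  have e1: "?u * (c - a) = c - b" using ne by simp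
  have e2: "\<And>u::real. u * a + (1 - u) * c = c - u * (c - a)" by (simp add: algebra_simps)
  have b: "?u * a + (1 - ?u) * c = b" unfolding e2[of ?u] e1 by simp
  have conc: "\<forall>x\<in>{0..1}. \<forall>y\<in>{0..1}. \<forall>u. x \<noteq> y \<and> 0 < u \<and> u < 1 \<longrightarrow>
        u * ln (f x) + (1 - u) * ln (f y) < ln (f (u * x + (1 - u) * y))"
    using lc unfolding strictly_log_concave_on_def strictly_concave_on_def by blast
  have "?u * ln (f a) + (1 - ?u) * ln (f c) < ln (f (?u * a + (1 - ?u) * c))"
    by (rule conc[rule_format]) (use assms u in auto)
  hence "?u * ln (f a) + (1 - ?u) * ln (f c) < ln (f b)" using b by simp
  hence "(c - a) * (?u * ln (f a) + (1 - ?u) * ln (f c)) \<le> (c - a) * ln (f b)"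
    using assms by (intro mult_left_mono) auto
  moreover have "(c - a) * (?u * ln (f a) + (1 - ?u) * ln (f c)) = (c - b) * ln (f a) + (b - a) * ln (f c)"
  proof -
    have g: "\<And>u A C::real. (c - a) * (u * A + (1 - u) * C) = (u * (c - a)) * A + ((c - a) - u * (c - a)) * C"
      by (simp add: algebra_simps)
    show ?thesis unfolding g e1 by (simp add: algebra_simps)
  qed
  ultimately show ?thesis by simp
qed

lemma ratio_ln:
  assumes "0 < h" "h \<le> u1" "u1 \<le> u2" "u2 \<le> 1"
  shows "ln (f u2) - ln (f (u2 - h)) \<le> ln (f u1) - ln (f (u1 - h))"
proof (cases "u1 = u2")
  case False
  hence lt: "u1 < u2" using assms by auto
  define A where "A = ln (f (u1 - h))"
  define B where "B = ln (f u1)"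
  define C where "C = ln (f u2)"
  define Q where "Q = ln (f (u2 - h))"
  define L where "L = u2 - u1 + h"
  have L: "L > 0" using assms lt by (simp add: L_def)
  have 1: "(u2 - u1) * A + h * C \<le> L * B"
    using chord[of "u1 - h" u1 u2] assms lt by (simp add: A_def B_def C_def L_def algebra_simps)
  have 2: "h * A + (u2 - u1) * C \<le> L * Q"
    using chord[of "u1 - h" "u2 - h" u2] assms lt by (simp add: A_def Q_def C_def L_def algebra_simps)
  have "L * (C - Q) \<le> L * (B - A)"
  proof -
    have "L * (C - Q) \<le> h * (C - A)" using 2 by (simp add: L_def algebra_simps)
    also have "\<dots> \<le> L * (B - A)" using 1 by (simp add: L_def algebra_simps)
    finally show ?thesis .
  qed
  hence "C - Q \<le> B - A" using L by (simp add: mult_le_cancel_left)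
  thus ?thesis by (simp add: A_def B_def C_def Q_def)
qed simp

lemma ratio:
  assumes "0 < h" "h \<le> u1" "u1 \<le> u2" "u2 \<le> 1"
  shows "f u2 * f (u1 - h) \<le> f u1 * f (u2 - h)"
proof -
  have p: "f u2 > 0" "f (u1 - h) > 0" "f u1 > 0" "f (u2 - h) > 0" using pos assms by auto
  have "ln (f u2) + ln (f (u1 - h)) \<le> ln (f u1) + ln (f (u2 - h))"
    using ratio_ln[OF assms] by simp
  hence "ln (f u2 * f (u1 - h)) \<le> ln (f u1 * f (u2 - h))" using p by (simp add: ln_mult)
  thus ?thesis using p by simp
qed


lemma atMost01: "0 \<le> (x::real) \<Longrightarrow> x \<le> 1 \<Longrightarrow> {..x} \<inter> {0..1} = {0..x}" by (auto simp: atLeastAtMost_iff)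

lemma Fpos: "0 < x \<Longrightarrow> x \<le> 1 \<Longrightarrow> 0 < mass f {..x}"
  by (rule mass_pos_interval[of 0 x]) auto

lemma shift:
  fixes g :: "real \<Rightarrow> real"
  shows "integrable lborel (\<lambda>u. indicator {h..h+x} u * g (u - h)) \<longleftrightarrow> integrable lborel (\<lambda>v. indicator {0..x} v * g v)"
    and "integral\<^sup>L lborel (\<lambda>u. indicator {h..h+x} u * g (u - h)) = integral\<^sup>L lborel (\<lambda>v. indicator {0..x} v * g v)"
proof -
  have e: "(\<lambda>v. indicator {h..h+x} (h + 1 * v) * g (h + 1 * v - h)) = (\<lambda>v. indicator {0..x} v * g v)"
    by (auto simp: indicator_def fun_eq_iff)
  show "integrable lborel (\<lambda>u. indicator {h..h+x} u * g (u - h)) \<longleftrightarrow> integrable lborel (\<lambda>v. indicator {0..x} v * g v)"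
    using lborel_integrable_real_affine_iff[of 1 "\<lambda>u. indicator {h..h+x} u * g (u - h)" h] e by simp
  show "integral\<^sup>L lborel (\<lambda>u. indicator {h..h+x} u * g (u - h)) = integral\<^sup>L lborel (\<lambda>v. indicator {0..x} v * g v)"
    using lborel_integral_real_affine[of 1 "\<lambda>u. indicator {h..h+x} u * g (u - h)" h] e by simp
qed

lemma arith1:
  fixes fu fuh fv fvh Fx Fy :: real
  assumes "fv * fuh \<le> fu * fvh" "fvh * Fy < fv * Fx" "0 < Fx" "0 < fvh" "0 < fuh"
  shows "fuh * Fy < fu * Fx"
proof -
  have "fvh * (fuh * Fy) = fuh * (fvh * Fy)" by simp
  also have "\<dots> < fuh * (fv * Fx)" using assms by simp
  also have "\<dots> = (fv * fuh) * Fx" by simp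
  also have "\<dots> \<le> (fu * fvh) * Fx" using assms by (intro mult_right_mono) auto
  also have "\<dots> = fvh * (fu * Fx)" by simp
  finally show ?thesis using assms by (simp add: mult_less_cancel_left)
qed

lemma D_mono:
  assumes x: "0 < x" "x \<le> y" "y \<le> 1"
  shows "cexp f {..y} \<le> cexp f {..x} + (y - x)"
proof (cases "x = y")
  case False
  define h where "h = y - x"
  have h: "0 < h" "y = h + x" using x False by (auto simp: h_def)
  define Fx where "Fx = mass f {..x}"
  define Fy where "Fy = mass f {..y}"
  have Fp: "0 < Fx" "0 < Fy" using Fpos x by (auto simp: Fx_def Fy_def)
  define P where "P u = indicator {0..y} u * f u" for u
  define Q where "Q u = indicator {h..y} u * f (u - h)" for u
  have ix: "{..x} \<inter> {0..1} = {0..x}" "{..y} \<inter> {0..1} = {0..y}" using x by auto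
  have iP: "integrable lborel P" using intf[of "{..y}"] unfolding ix set_integrable_def P_def by simp
  have iuP: "integrable lborel (\<lambda>u. u * P u)"
    using intxf[of "{..y}"] unfolding ix set_integrable_def P_def by (simp add: mult_ac)
  have IP: "integral\<^sup>L lborel P = Fy"
    unfolding Fy_def mass_def ix set_lebesgue_integral_def P_def by simp
  have IuP: "integral\<^sup>L lborel (\<lambda>u. u * P u) = num f {..y}"
    unfolding num_def ix set_lebesgue_integral_def P_def by (simp add: mult_ac)
  have ifx: "integrable lborel (\<lambda>v. indicator {0..x} v * f v)"
    using intf[of "{..x}"] unfolding ix set_integrable_def by simp
  have ixfx: "integrable lborel (\<lambda>v. indicator {0..x} v * (v * f v))"
    using intxf[of "{..x}"] unfolding ix set_integrable_def by simp
  have iQ: "integrable lborel Q" unfolding Q_def h(2) using shift(1)[of h x f] ifx by simp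
  have IQ: "integral\<^sup>L lborel Q = Fx" unfolding Q_def h(2) shift(2)[of h x f]
    unfolding Fx_def mass_def ix set_lebesgue_integral_def by simp
  have eQ: "(\<lambda>u. u * Q u) = (\<lambda>u. indicator {h..h+x} u * ((\<lambda>v. (v + h) * f v) (u - h)))"
    by (auto simp: Q_def h(2) fun_eq_iff)
  have ivh: "integrable lborel (\<lambda>v. indicator {0..x} v * ((v + h) * f v))"
  proof -
    have "integrable lborel (\<lambda>v. indicator {0..x} v * (v * f v) + h * (indicator {0..x} v * f v))"
      using ixfx ifx by auto
    thus ?thesis by (simp add: algebra_simps)
  qed
  have iuQ: "integrable lborel (\<lambda>u. u * Q u)" unfolding eQ using shift(1)[of h x "\<lambda>v. (v + h) * f v"] ivh by simp
  have IuQ: "integral\<^sup>L lborel (\<lambda>u. u * Q u) = num f {..x} + h * Fx"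
  proof -
    have "integral\<^sup>L lborel (\<lambda>u. u * Q u) = integral\<^sup>L lborel (\<lambda>v. indicator {0..x} v * ((v + h) * f v))"
      unfolding eQ using shift(2)[of h x "\<lambda>v. (v + h) * f v"] by simp
    also have "\<dots> = integral\<^sup>L lborel (\<lambda>v. indicator {0..x} v * (v * f v) + h * (indicator {0..x} v * f v))"
      by (simp add: algebra_simps)
    also have "\<dots> = num f {..x} + h * Fx"
      using ixfx ifx unfolding num_def Fx_def mass_def ix set_lebesgue_integral_def by simp
    finally show ?thesis .
  qed
  define w where "w u = P u / Fy - Q u / Fx" for u
  define X where "X = insert h {u \<in> {h..y}. 0 < w u}"
  define us where "us = Sup X"
  have bX: "bdd_above X" unfolding X_def using h by (auto intro!: bdd_aboveI[of _ y])
  have Xne: "X \<noteq> {}" unfolding X_def by auto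
  have hus: "h \<le> us" unfolding us_def by (rule cSup_upper[OF _ bX]) (simp add: X_def)
  have wI: "w u = f u / Fy - f (u - h) / Fx" if "h \<le> u" "u \<le> y" for u
    using that h by (simp add: w_def P_def Q_def)
  have sign: "(u - us) * w u \<le> 0" for u
  proof -
    consider "u < 0 \<or> y < u" | "0 \<le> u" "u < h" | "h \<le> u" "u \<le> y" by linarith
    thus ?thesis
    proof cases
      case 1 thus ?thesis using h by (auto simp: w_def P_def Q_def)
    next
      case 2
      hence "u \<in> {0..y}" "u \<notin> {h..y}" using h x by auto
      hence "w u = f u / Fy" by (simp add: w_def P_def Q_def)
      moreover have "f u > 0" using 2 pos h x by auto
      ultimately have "w u \<ge> 0" using Fp by simp
      moreover have "u - us < 0" using 2 hus by simp
      ultimately show ?thesis by (simp add: mult_nonpos_nonneg)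
    next
      case 3
      show ?thesis
      proof (cases "0 < w u")
        case True
        hence "u \<le> us" unfolding us_def using 3 by (intro cSup_upper[OF _ bX]) (auto simp: X_def)
        thus ?thesis using True by (simp add: mult_nonpos_nonneg)
      next
        case nw: False
        have "us \<le> u"
        proof (rule ccontr)
          assume "\<not> us \<le> u"
          hence "u < Sup X" by (simp add: us_def)
          then obtain v where v: "v \<in> X" "u < v" using less_cSup_iff[OF Xne bX] by auto
          hence v2: "h \<le> v" "v \<le> y" "0 < w v" using 3 by (auto simp: X_def)
          have r: "f v * f (u - h) \<le> f u * f (v - h)"
            using ratio[of h u v] h 3 v v2 x by auto
          have "0 < f v / Fy - f (v - h) / Fx" using wI[OF v2(1,2)] v2(3) by simp
          hence "f (v - h) / Fx < f v / Fy" by simp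
          hence wv: "f (v - h) * Fy < f v * Fx" using Fp by (simp add: divide_less_eq less_divide_eq field_simps)
          have p: "0 < f (v - h)" "0 < f (u - h)" using pos v2 3 h x by auto
          have "f (u - h) * Fy < f u * Fx" by (rule arith1[OF r wv Fp(1) p])
          hence "f (u - h) / Fx < f u / Fy" using Fp by (simp add: divide_less_eq less_divide_eq field_simps)
          hence "0 < w u" using wI[OF 3] by simp
          thus False using nw by simp
        qed
        thus ?thesis using nw by (simp add: mult_nonneg_nonpos)
      qed
    qed
  qed
  have int_eq: "integral\<^sup>L lborel (\<lambda>u. (u - us) * w u) =
      (num f {..y} / Fy - us) - (num f {..x} / Fx + h - us)"
  proof -
    have e: "(\<lambda>u. (u - us) * w u) = (\<lambda>u. (1 / Fy) * (u * P u) - (us / Fy) * P u - ((1 / Fx) * (u * Q u) - (us / Fx) * Q u))"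
      using Fp by (auto simp: w_def fun_eq_iff field_simps)
    have "integral\<^sup>L lborel (\<lambda>u. (u - us) * w u) =
       (1 / Fy) * num f {..y} - (us / Fy) * Fy - ((1 / Fx) * (num f {..x} + h * Fx) - (us / Fx) * Fx)"
      unfolding e using iP iuP iQ iuQ IP IuP IQ IuQ by simp
    also have "\<dots> = (num f {..y} / Fy - us) - (num f {..x} / Fx + h - us)"
      using Fp by (simp add: field_simps)
    finally show ?thesis .
  qed
  have "integral\<^sup>L lborel (\<lambda>u. (u - us) * w u) \<le> 0"
  proof -
    have "0 \<le> integral\<^sup>L lborel (\<lambda>u. - ((u - us) * w u))"
      using sign by (intro integral_nonneg_AE) (auto simp: not_le)
    thus ?thesis by simp
  qed
  hence "num f {..y} / Fy \<le> num f {..x} / Fx + h" using int_eq by simp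
  thus ?thesis by (simp add: cexp_num Fx_def Fy_def h_def)
qed simp

end



lemma V_ge: "p \<le> sale_val I S p" if "0 < S" using that by (simp add: sale_val_def)
lemma V_le: "sale_val I S p \<le> p + S" if "0 < S" using that by (simp add: sale_val_def)
lemma V_I: "I \<le> p \<Longrightarrow> sale_val I S p = p + S" by (simp add: sale_val_def)
lemma V_lt: "p < I \<Longrightarrow> sale_val I S p = p" by (simp add: sale_val_def)
lemma V_mono: "0 < S \<Longrightarrow> p < q \<Longrightarrow> sale_val I S p < sale_val I S q"
  by (simp add: sale_val_def)
lemma V_mono': "0 < S \<Longrightarrow> sale_val I S p < sale_val I S q \<Longrightarrow> p < q"
  by (auto simp: sale_val_def split: if_splits)

lemma le_limit:
  fixes z c e :: real
  assumes "\<And>th. c < th \<Longrightarrow> th \<le> e \<Longrightarrow> z \<le> th" "c < e"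
  shows "z \<le> c"
proof (rule ccontr)
  assume "\<not> z \<le> c"
  hence "z \<le> (c + min z e) / 2" using assms(1)[of "(c + min z e) / 2"] assms(2) by auto
  thus False using \<open>\<not> z \<le> c\<close> assms(2) by (auto simp: min_def split: if_splits)
qed

locale model = dens_lc f for f :: "real \<Rightarrow> real" +
  fixes I S pg th0 p0 :: real and s1 :: "real \<Rightarrow> act1" and s2 :: "real \<Rightarrow> act1 \<Rightarrow> bool"
    and p1 qg qn a c d :: real
  assumes f_total: "set_lebesgue_integral lborel {0..1} f = 1"
    and I_pos: "0 < I" and S_pos: "0 < S"
    and th0: "0 < th0" "th0 < 1" "th0 - S = cexp f {..th0}"
    and th0_unique: "\<forall>x\<in>{0<..<1}. x - S = cexp f {..x} \<longrightarrow> x = th0"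
    and p0_def: "p0 = cexp f {..th0}"
    and p0_I: "I \<le> p0"
    and pg: "p0 < pg" "pg < 1 - S"
    and eq: "transparent_eq f I S pg s1 s2 p1 qg qn"
    and cut: "has_cutoffs s1 s2 a c d"
    and delayed: "c < d"
begin

abbreviation "V \<equiv> sale_val I S"
abbreviation "pay \<equiv> payoff I S pg p1 qg qn s1 s2"

lemma uniq: "0 < x \<Longrightarrow> x < 1 \<Longrightarrow> x - S = cexp f {..x} \<Longrightarrow> x = th0"
  using th0_unique by simp

lemma Dlt: "0 < x \<Longrightarrow> x < th0 \<Longrightarrow> x - S < cexp f {..x}"
proof -
  assume x: "0 < x" "x < th0"
  have "cexp f {..th0} \<le> cexp f {..x} + (th0 - x)" by (rule D_mono) (use x th0(1,2) in auto)
  hence "x - S \<le> cexp f {..x}" using th0(3) by argo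
  moreover have "x - S \<noteq> cexp f {..x}"
  proof
    assume "x - S = cexp f {..x}"
    hence "x = th0" using uniq[of x] x th0(2) by argo
    thus False using x by simp
  qed
  ultimately show ?thesis by simp
qed

lemma Dgt: "th0 < x \<Longrightarrow> x \<le> 1 \<Longrightarrow> cexp f {..x} < x - S"
proof -
  assume x: "th0 < x" "x \<le> 1"
  define y where "y = (th0 + x) / 2"
  have y: "th0 < y" "y < x" "y < 1" using x by (auto simp: y_def)
  have "cexp f {..y} \<le> cexp f {..th0} + (y - th0)" by (rule D_mono) (use y th0(1,2) in auto)
  hence "cexp f {..y} \<le> y - S" using th0(3) by argo
  moreover have "y - S \<noteq> cexp f {..y}"
  proof
    assume "y - S = cexp f {..y}"
    hence "y = th0" using uniq[of y] y th0(1,2) by argo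
    thus False using y by simp
  qed
  ultimately have "cexp f {..y} < y - S" by argo
  moreover have "cexp f {..x} \<le> cexp f {..y} + (x - y)" by (rule D_mono) (use y th0(1,2) x in auto)
  ultimately show ?thesis by argo
qed

lemma cexp_strict_mono:
  assumes "0 < u" "u < v" "v \<le> 1"
  shows "cexp f {..u} < cexp f {..v}"
proof -
  have d: "{..u} \<inter> {u<..v} = {}" and U: "{..v} = {..u} \<union> {u<..v}" using assms by auto
  have m1: "mass f {..v} = mass f {..u} + mass f {u<..v}"
    unfolding U by (rule mass_Un(1)[OF _ _ d]) auto
  have m2: "num f {..v} = num f {..u} + num f {u<..v}"
    unfolding U by (rule mass_Un(2)[OF _ _ d]) auto
  have p1: "0 < mass f {..u}" using Fpos assms by auto
  have p2: "0 < mass f {u<..v}" by (rule mass_pos_interval[of u v]) (use assms in auto)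
  have c1: "cexp f {..u} < u" by (rule cexp_lt[OF _ p1]) auto
  have c2: "u < cexp f {u<..v}" by (rule cexp_gt[OF _ p2]) auto
  have n1: "num f {..u} = mass f {..u} * cexp f {..u}" by (rule num_eq) simp
  have n2: "num f {u<..v} = mass f {u<..v} * cexp f {u<..v}" by (rule num_eq) simp
  have "mass f {u<..v} * cexp f {..u} < mass f {u<..v} * cexp f {u<..v}"
    using c1 c2 p2 by (intro mult_strict_left_mono) argo+
  hence lt: "mass f {..v} * cexp f {..u} < num f {..v}"
    unfolding m1 m2 n1 n2 by (simp add: distrib_right)
  have mv: "0 < mass f {..v}" using m1 p1 p2 by argo
  show ?thesis unfolding cexp_num[of "{..v}"] using lt mv by (simp add: pos_less_divide_eq mult.commute)
qed

lemma mass1: "mass f {..1} = 1" using f_total by (simp add: mass_def atMost01)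

lemmas eqs = eq[unfolded transparent_eq_def]
lemmas eq1 = eqs[THEN conjunct1]
lemmas eq2 = eqs[THEN conjunct2, THEN conjunct1]
lemmas eq3 = eqs[THEN conjunct2, THEN conjunct2, THEN conjunct1]
lemmas eq4 = eqs[THEN conjunct2, THEN conjunct2, THEN conjunct2, THEN conjunct1]
lemmas eq5 = eqs[THEN conjunct2, THEN conjunct2, THEN conjunct2, THEN conjunct2, THEN conjunct1]
lemmas eq6 = eqs[THEN conjunct2, THEN conjunct2, THEN conjunct2, THEN conjunct2, THEN conjunct2, THEN conjunct1]
lemmas eq7 = eqs[THEN conjunct2, THEN conjunct2, THEN conjunct2, THEN conjunct2, THEN conjunct2, THEN conjunct2, THEN conjunct1]
lemmas eq8 = eqs[THEN conjunct2, THEN conjunct2, THEN conjunct2, THEN conjunct2, THEN conjunct2, THEN conjunct2, THEN conjunct2, THEN conjunct1]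

lemma measS: "{th. s1 th = x} \<in> sets lborel" "{th. s2 th x} \<in> sets lborel"
  using eq1 by blast+

lemma t2: "th \<in> {0..1} \<Longrightarrow> s2 th x \<Longrightarrow> th \<le> V (price2 qg qn x)"
          "th \<in> {0..1} \<Longrightarrow> \<not> s2 th x \<Longrightarrow> V (price2 qg qn x) \<le> th"
  using eq2 by blast+

lemma t1: "th \<in> {0..1} \<Longrightarrow> flow1 I S pg p1 x th + cont I S qg qn x th \<le> pay th"
  using eq3 by blast

lemma be: "mass f {th. s1 th = Mkt} > 0 \<Longrightarrow> p1 = cexp f {th. s1 th = Mkt}"
   "mass f {th. s1 th = Gov \<and> s2 th Gov} > 0 \<Longrightarrow> qg = cexp f {th. s1 th = Gov \<and> s2 th Gov}"
   "mass f {th. s1 th \<noteq> Gov \<and> s2 th (s1 th)} > 0 \<Longrightarrow> qn = cexp f {th. s1 th \<noteq> Gov \<and> s2 th (s1 th)}"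
  using eq4 eq5 eq6 by blast+

lemma bert1: "p' > p1 \<Longrightarrow> set_lebesgue_integral lborel
         ({th. V p' + cont I S qg qn Mkt th > pay th} \<inter> {0..1}) (\<lambda>x. (x - p') * f x) \<le> 0"
  using eq7 by blast

lemma bertg: "p' > qg \<Longrightarrow> set_lebesgue_integral lborel
         ({th. s1 th = Gov \<and> V p' > th} \<inter> {0..1}) (\<lambda>x. (x - p') * f x) \<le> 0"
  using eq8 by blast

lemma Vpg: "V pg = pg + S" using pg p0_I by (simp add: V_I)

lemma altGov: "th \<in> {0..1} \<Longrightarrow> pg + S + max th (V qg) \<le> pay th"
  using t1[of th Gov] by (simp add: flow1_def cont_def price2_def Vpg)
lemma altMkt: "th \<in> {0..1} \<Longrightarrow> V p1 + max th (V qn) \<le> pay th"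
  using t1[of th Mkt] by (simp add: flow1_def cont_def price2_def)
lemma altNo: "th \<in> {0..1} \<Longrightarrow> th + max th (V qn) \<le> pay th"
  using t1[of th NoSale] by (simp add: flow1_def cont_def price2_def)

lemma payG: "s1 th = Gov \<Longrightarrow> s2 th Gov \<Longrightarrow> pay th = pg + S + V qg"
  by (simp add: payoff_def flow1_def price2_def Vpg)
lemma payGn: "s1 th = Gov \<Longrightarrow> \<not> s2 th Gov \<Longrightarrow> pay th = pg + S + th"
  by (simp add: payoff_def flow1_def price2_def Vpg)
lemma payM: "s1 th = Mkt \<Longrightarrow> s2 th Mkt \<Longrightarrow> pay th = V p1 + V qn"
  by (simp add: payoff_def flow1_def price2_def)
lemma payN: "th \<in> {0..1} \<Longrightarrow> s1 th = NoSale \<Longrightarrow> pay th = th + max th (V qn)"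
  using t2[of th NoSale] by (cases "s2 th NoSale") (auto simp: payoff_def flow1_def price2_def)

lemma cuts: "0 < a \<and> a \<le> c \<and> c \<le> d \<and>
     (\<forall>th\<in>{0..1}.
        (th \<le> a \<longrightarrow> sells1 s1 th \<and> sells2 s1 s2 th) \<and>
        (a < th \<and> th \<le> c \<longrightarrow> s1 th = Gov \<and> \<not> sells2 s1 s2 th) \<and>
        (c < th \<and> th \<le> d \<longrightarrow> \<not> sells1 s1 th \<and> sells2 s1 s2 th) \<and>
        (d < th \<longrightarrow> \<not> sells1 s1 th \<and> \<not> sells2 s1 s2 th))"
  using cut unfolding has_cutoffs_def .

lemma cutv: "0 < a" "a \<le> c" "c \<le> d" using cuts by auto

lemma low: "th \<in> {0..1} \<Longrightarrow> th \<le> a \<Longrightarrow> s1 th \<noteq> NoSale \<and> s2 th (s1 th)"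
  using cuts unfolding sells1_def sells2_def by auto
lemma mid: "th \<in> {0..1} \<Longrightarrow> a < th \<Longrightarrow> th \<le> c \<Longrightarrow> s1 th = Gov \<and> \<not> s2 th Gov"
  using cuts unfolding sells1_def sells2_def by auto
lemma hi: "th \<in> {0..1} \<Longrightarrow> c < th \<Longrightarrow> th \<le> d \<Longrightarrow> s1 th = NoSale \<and> s2 th NoSale"
  using cuts unfolding sells1_def sells2_def by auto
lemma top: "th \<in> {0..1} \<Longrightarrow> d < th \<Longrightarrow> s1 th = NoSale \<and> \<not> s2 th NoSale"
  using cuts unfolding sells1_def sells2_def by auto

lemma act_cases: "(x::act1) = Gov \<or> x = Mkt \<or> x = NoSale" by (cases x) auto


lemma nonempty_of_mass: "0 < mass f A \<Longrightarrow> \<exists>th\<in>{0..1}. th \<in> A"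
proof (rule ccontr)
  assume "0 < mass f A" "\<not> (\<exists>th\<in>{0..1}. th \<in> A)"
  hence "A \<inter> {0..1} = {}" by auto
  hence "mass f A = 0" by (simp add: mass_def set_lebesgue_integral_def)
  thus False using \<open>0 < mass f A\<close> by simp
qed

lemma mGv: "{th. s1 th = Gov} \<in> sets lborel" and mMk: "{th. s1 th = Mkt} \<in> sets lborel"
  using measS by auto

lemma c_lt1: "c < 1"
proof (rule ccontr)
  assume "\<not> c < 1"
  hence c1: "1 \<le> c" by simp
  show False
  proof (cases "a < 1")
    case True
    have "s1 1 = Gov \<and> \<not> s2 1 Gov" using mid[of 1] True c1 by auto
    hence "pay 1 = pg + S + 1" using payGn by auto
    moreover have "1 + max 1 (V qn) \<le> pay 1" using altNo[of 1] by auto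
    ultimately show False using pg by (simp add: max_def split: if_splits)
  next
    case False
    have allow: "s1 th \<noteq> NoSale \<and> s2 th (s1 th)" if "th \<in> {0..1}" for th
      using low[OF that] False that by auto
    define E where "E = cexp f {..1}"
    have hE: "E < 1 - S" using Dgt[of 1] th0 by (simp add: E_def)
    define Mk where "Mk = {th. s1 th = Mkt}"
    define Gv where "Gv = {th. s1 th = Gov}"
    have ms: "Mk \<in> sets lborel" "Gv \<in> sets lborel" using mGv mMk by (auto simp: Mk_def Gv_def)
    have dMG: "Mk \<inter> Gv = {}" by (auto simp: Mk_def Gv_def)
    have dd: "Mk - Gv = Mk" "Gv - Mk = Gv" using dMG by auto
    have UMG: "(Mk \<union> Gv) \<inter> {0..1} = {..1} \<inter> {0..1}"
    proof -
      have "th \<in> Mk \<union> Gv" if "th \<in> {0..1}" for th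
        using allow[OF that] act_cases[of "s1 th"] by (auto simp: Mk_def Gv_def)
      moreover have e: "{..1::real} \<inter> {0..1} = {0..1}" by auto
      ultimately show ?thesis unfolding e by blast
    qed
    have m1: "mass f (Mk \<union> Gv) = 1" using cong01(1)[OF UMG] mass1 by simp
    have ce: "cexp f (Mk \<union> Gv) = E" using cong01(3)[OF UMG] by (simp add: E_def)
    have mU: "mass f (Mk \<union> Gv) = mass f Mk + mass f Gv" "num f (Mk \<union> Gv) = num f Mk + num f Gv"
      using mass_Un[OF ms dMG] by auto
    have G2: "{th. s1 th = Gov \<and> s2 th Gov} \<inter> {0..1} = Gv \<inter> {0..1}"
      using allow by (auto simp: Gv_def) (metis)
    have N2: "{th. s1 th \<noteq> Gov \<and> s2 th (s1 th)} \<inter> {0..1} = Mk \<inter> {0..1}"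
    proof -
      have "th \<in> Mk" if "th \<in> {0..1}" "s1 th \<noteq> Gov" for th
        using allow[OF that(1)] that(2) act_cases[of "s1 th"] by (auto simp: Mk_def)
      moreover have "s2 th Mkt" if "th \<in> {0..1}" "s1 th = Mkt" for th using allow[OF that(1)] that(2) by simp
      ultimately show ?thesis by (auto simp: Mk_def)
    qed
    have Vle: "V q < q + S + 1" for q using V_le[OF S_pos, of I q] by simp
    show False
    proof (cases "mass f Mk = 0")
      case True
      have mG: "mass f Gv = 1" using m1 mU True by simp
      have "mass f {th. s1 th = Gov \<and> s2 th Gov} > 0" using cong01(1)[OF G2] mG by simp
      hence "qg = cexp f Gv" using be(2) cong01(3)[OF G2] by simp
      also have "cexp f Gv = cexp f (Mk \<union> Gv)"
        by (rule null_mod(3)) (use ms dMG dd True in \<open>auto simp: Un_Diff\<close>)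
      finally have qE: "qg = E" using ce by simp
      have "V qg \<le> qg + S" by (rule V_le[OF S_pos])
      hence vq: "max 0 (V qg) < 1" using hE qE by simp
      obtain th where th: "max 0 (V qg) < th" "th < 1" "th \<notin> Mk"
        using exists_not_in[OF _ vq _ ms(1) True] by auto
      hence t01: "th \<in> {0..1}" by auto
      have "s1 th = Gov" using allow[OF t01] th(3) act_cases[of "s1 th"] by (auto simp: Mk_def)
      hence "th \<le> V qg" using allow[OF t01] t2(1)[OF t01, of Gov] by (simp add: price2_def)
      thus False using th by simp
    next
      case False
      hence mMp: "0 < mass f Mk" using mass_nonneg[OF ms(1)] by simp
      have p1e: "p1 = cexp f Mk" using be(1) mMp by (simp add: Mk_def)
      have "mass f {th. s1 th \<noteq> Gov \<and> s2 th (s1 th)} > 0" using cong01(1)[OF N2] mMp by simp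
      hence qne: "qn = cexp f Mk" using be(3) cong01(3)[OF N2] by simp
      show False
      proof (cases "mass f Gv = 0")
        case True
        have "cexp f Mk = cexp f (Mk \<union> Gv)"
          by (rule null_mod(3)) (use ms dMG dd True in \<open>auto simp: Un_Diff\<close>)
        hence qE: "qn = E" using ce qne by simp
        have "V qn \<le> qn + S" by (rule V_le[OF S_pos])
        hence vq: "max 0 (V qn) < 1" using hE qE by simp
        obtain th where th: "max 0 (V qn) < th" "th < 1" "th \<notin> Gv"
          using exists_not_in[OF _ vq _ ms(2) True] by auto
        hence t01: "th \<in> {0..1}" by auto
        have "s1 th = Mkt" using allow[OF t01] th(3) act_cases[of "s1 th"] by (auto simp: Gv_def)
        hence "th \<le> V qn" using allow[OF t01] t2(1)[OF t01, of Mkt] by (simp add: price2_def)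
        thus False using th by simp
      next
        case False
        hence mGp: "0 < mass f Gv" using mass_nonneg[OF ms(2)] by simp
        have "mass f {th. s1 th = Gov \<and> s2 th Gov} > 0" using cong01(1)[OF G2] mGp by simp
        hence qge: "qg = cexp f Gv" using be(2) cong01(3)[OF G2] by simp
        obtain tg where tg: "tg \<in> {0..1}" "s1 tg = Gov" using nonempty_of_mass[OF mGp] by (auto simp: Gv_def)
        obtain tm where tm: "tm \<in> {0..1}" "s1 tm = Mkt" using nonempty_of_mass[OF mMp] by (auto simp: Mk_def)
        have "V p1 + max tg (V qn) \<le> pg + S + V qg"
          using altMkt[OF tg(1)] payG[OF tg(2)] allow[OF tg(1)] tg(2) by simp
        hence e1: "V p1 + V qn \<le> pg + S + V qg" by (simp add: max_def split: if_splits)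
        have "pg + S + max tm (V qg) \<le> V p1 + V qn"
          using altGov[OF tm(1)] payM[OF tm(2)] allow[OF tm(1)] tm(2) by simp
        hence e2: "pg + S + V qg \<le> V p1 + V qn" by (simp add: max_def split: if_splits)
        have "pay 1 = V p1 + V qn"
        proof (cases "s1 1 = Gov")
          case True thus ?thesis using payG allow[of 1] e1 e2 by simp
        next
          case False
          hence "s1 1 = Mkt" using allow[of 1] act_cases[of "s1 1"] by auto
          thus ?thesis using payM allow[of 1] by simp
        qed
        moreover have "1 + max 1 (V qn) \<le> pay 1" using altNo[of 1] by auto
        ultimately have two: "2 \<le> V p1 + V qn" by (simp add: max_def split: if_splits)
        define m where "m = cexp f Mk"
        have "V m \<le> m + S" by (rule V_le[OF S_pos])
        hence mS: "1 - S \<le> m" using two p1e qne m_def by simp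
        have "V qg \<le> qg + S" by (rule V_le[OF S_pos])
        hence gS: "1 - S < qg" using two e1 pg by simp
        have "E = num f (Mk \<union> Gv)" using ce m1 by (simp add: cexp_num)
        also have "\<dots> = mass f Mk * m + mass f Gv * qg"
          using mU num_eq ms qge m_def by simp
        also have "\<dots> > mass f Mk * (1 - S) + mass f Gv * (1 - S)"
        proof -
          have "mass f Mk * (1 - S) \<le> mass f Mk * m" using mS mMp by (simp add: mult_left_mono)
          moreover have "mass f Gv * (1 - S) < mass f Gv * qg" using gS mGp by simp
          ultimately show ?thesis by argo
        qed
        also have "mass f Mk * (1 - S) + mass f Gv * (1 - S) = (mass f Mk + mass f Gv) * (1 - S)"
          by (simp add: algebra_simps)
        also have "\<dots> = 1 - S" using m1 mU by simp
        finally have "E > 1 - S" .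
        thus False using hE by simp
      qed
    qed
  qed
qed


lemma ce: "c < min d 1" using c_lt1 delayed by simp

lemma a_pos: "0 < a" and ac: "a \<le> c" using cutv by auto

lemma hiF:
  assumes "c < th" "th \<le> min d 1"
  shows "th \<le> V qn" "pg + S + max th (V qg) \<le> th + V qn" "V p1 \<le> th"
proof -
  have t01: "th \<in> {0..1}" using assms a_pos ac by auto
  have h: "s1 th = NoSale \<and> s2 th NoSale" using hi[OF t01] assms by auto
  show tq: "th \<le> V qn" using t2(1)[OF t01, of NoSale] h by (simp add: price2_def)
  have p: "pay th = th + V qn" using payN[OF t01] h tq by simp
  show "pg + S + max th (V qg) \<le> th + V qn" using altGov[OF t01] p by simp
  show "V p1 \<le> th" using altMkt[OF t01] p tq by simp
qed

lemma F1: "min d 1 \<le> V qn" using hiF(1)[of "min d 1"] ce by simp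

lemma F2: "pg \<le> qn" "I \<le> qn" "V qn = qn + S"
proof -
  have "pg + S + max (min d 1) (V qg) \<le> min d 1 + V qn" using hiF(2)[of "min d 1"] ce by simp
  hence A: "pg + S \<le> V qn" by (simp add: max_def split: if_splits)
  show I: "I \<le> qn"
  proof (rule ccontr)
    assume "\<not> I \<le> qn"
    hence "V qn = qn" by (simp add: V_lt)
    thus False using A \<open>\<not> I \<le> qn\<close> p0_I pg S_pos by simp
  qed
  thus "V qn = qn + S" by (simp add: V_I)
  thus "pg \<le> qn" using A by simp
qed

lemma F3: "V p1 \<le> c" by (rule le_limit[OF hiF(3) ce])

lemma F4: "pg + S + V qg \<le> c + V qn"
proof -
  have "pg + S + V qg - V qn \<le> c"
  proof (rule le_limit[OF _ ce])
    fix th assume "c < th" "th \<le> min d 1"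
    from hiF(2)[OF this] show "pg + S + V qg - V qn \<le> th" by (simp add: max_def split: if_splits)
  qed
  thus ?thesis by simp
qed

lemma F5: "c < V qn" using F1 ce by (meson less_le_trans)

lemma T1: "d < 1 \<Longrightarrow> V qn = d"
proof -
  assume d1: "d < 1"
  have "V qn \<le> d"
  proof (rule le_limit[OF _ d1])
    fix th assume th: "d < th" "th \<le> 1"
    hence t01: "th \<in> {0..1}" using a_pos ac cutv by auto
    show "V qn \<le> th" using t2(2)[OF t01, of NoSale] top[OF t01] th by (simp add: price2_def)
  qed
  thus ?thesis using F1 d1 by simp
qed

lemma T2: "1 \<le> d \<Longrightarrow> 1 \<le> V qn" using F1 by simp

lemma payHi: "th \<in> {0..1} \<Longrightarrow> c < th \<Longrightarrow> pay th = th + max th (V qn)"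
proof -
  assume t: "th \<in> {0..1}" "c < th"
  have "s1 th = NoSale"
  proof (cases "th \<le> d")
    case True thus ?thesis using hi[OF t(1)] t by auto
  next
    case False thus ?thesis using top[OF t(1)] by auto
  qed
  thus ?thesis by (rule payN[OF t(1)])
qed

definition "GL = {th. th \<le> a \<and> s1 th = Gov}"
definition "MkL = {th. th \<le> a \<and> s1 th = Mkt}"

lemma mGL: "GL \<in> sets lborel" and mMkL: "MkL \<in> sets lborel"
proof -
  have "GL = {..a} \<inter> {th. s1 th = Gov}" "MkL = {..a} \<inter> {th. s1 th = Mkt}" by (auto simp: GL_def MkL_def)
  thus "GL \<in> sets lborel" "MkL \<in> sets lborel" using mGv mMk by auto
qed

lemma dGM: "GL \<inter> MkL = {}" by (auto simp: GL_def MkL_def)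

lemma lowF: "th \<in> {0..1} \<Longrightarrow> th \<le> a \<Longrightarrow> max th (V qn) = V qn"
  using F5 ac by simp

lemma lowG:
  assumes t: "th \<in> {0..1}" "th \<le> a" "s1 th = Gov"
  shows "th \<le> V qg" "V p1 + V qn \<le> pg + S + V qg" "th + V qn \<le> pg + S + V qg"
proof -
  have s: "s2 th Gov" using low[OF t(1,2)] t(3) by simp
  show "th \<le> V qg" using t2(1)[OF t(1) s] by (simp add: price2_def)
  have p: "pay th = pg + S + V qg" by (rule payG[OF t(3) s])
  show "V p1 + V qn \<le> pg + S + V qg" using altMkt[OF t(1)] p lowF[OF t(1,2)] by simp
  show "th + V qn \<le> pg + S + V qg" using altNo[OF t(1)] p lowF[OF t(1,2)] by simp
qed

lemma lowM:
  assumes t: "th \<in> {0..1}" "th \<le> a" "s1 th = Mkt"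
  shows "th \<le> V p1" "pg + S + max th (V qg) \<le> V p1 + V qn" "pay th = V p1 + V qn"
proof -
  have s: "s2 th Mkt" using low[OF t(1,2)] t(3) by simp
  show p: "pay th = V p1 + V qn" by (rule payM[OF t(3) s])
  show "th \<le> V p1" using altNo[OF t(1)] p lowF[OF t(1,2)] by simp
  show "pg + S + max th (V qg) \<le> V p1 + V qn" using altGov[OF t(1)] p by simp
qed

lemma lowGM: "th \<in> {0..1} \<Longrightarrow> th \<le> a \<Longrightarrow> s1 th = Gov \<or> s1 th = Mkt"
  using low act_cases by blast

lemma midF:
  assumes "a < th" "th \<le> c"
  shows "V qg \<le> th" "V qn \<le> pg + S" "V p1 + V qn \<le> pg + S + th"
proof -
  have t01: "th \<in> {0..1}" using assms a_pos c_lt1 by auto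
  have m: "s1 th = Gov" "\<not> s2 th Gov" using mid[OF t01] assms by auto
  show "V qg \<le> th" using t2(2)[OF t01 m(2)] by (simp add: price2_def)
  have p: "pay th = pg + S + th" by (rule payGn[OF m])
  have mx: "max th (V qn) = V qn" using F5 assms by simp
  show "V qn \<le> pg + S" using altNo[OF t01] p mx by simp
  show "V p1 + V qn \<le> pg + S + th" using altMkt[OF t01] p mx by simp
qed

lemma Nset: "{th. s1 th \<noteq> Gov \<and> s2 th (s1 th)} \<inter> {0..1} = (MkL \<union> {c<..min d 1}) \<inter> {0..1}"
proof (rule set_eqI)
  fix th
  show "th \<in> {th. s1 th \<noteq> Gov \<and> s2 th (s1 th)} \<inter> {0..1} \<longleftrightarrow> th \<in> (MkL \<union> {c<..min d 1}) \<inter> {0..1}"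
  proof (cases "th \<in> {0..1}")
    case t: True
    consider "th \<le> a" | "a < th" "th \<le> c" | "c < th" "th \<le> d" | "d < th" by linarith
    thus ?thesis
    proof cases
      case 1 thus ?thesis using low[OF t 1] lowGM[OF t 1] t ac ce by (auto simp: MkL_def)
    next
      case 2 thus ?thesis using mid[OF t 2] t by (auto simp: MkL_def)
    next
      case 3 thus ?thesis using hi[OF t 3] t a_pos ac by (auto simp: MkL_def)
    next
      case 4 thus ?thesis using top[OF t 4] t a_pos ac cutv by (auto simp: MkL_def)
    qed
  qed auto
qed

lemma qnN: "qn = cexp f (MkL \<union> {c<..min d 1})"
proof -
  have "0 < mass f (MkL \<union> {c<..min d 1})"
    by (rule mass_pos_interval[of c "min d 1"]) (use ce a_pos ac mMkL in auto)
  thus ?thesis using be(3) cong01[OF Nset] by simp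
qed

lemma MkSet: "{th. s1 th = Mkt} \<inter> {0..1} = MkL \<inter> {0..1}"
proof -
  have "th \<le> a" if "th \<in> {0..1}" "s1 th = Mkt" for th
  proof (rule ccontr)
    assume "\<not> th \<le> a"
    thus False using that mid[OF that(1)] hi[OF that(1)] top[OF that(1)] by (cases "th \<le> c"; cases "th \<le> d") auto
  qed
  thus ?thesis by (auto simp: MkL_def)
qed

lemma G2Set: "{th. s1 th = Gov \<and> s2 th Gov} \<inter> {0..1} = GL \<inter> {0..1}"
proof -
  have "th \<le> a" if "th \<in> {0..1}" "s1 th = Gov" "s2 th Gov" for th
  proof (rule ccontr)
    assume "\<not> th \<le> a"
    thus False using that mid[OF that(1)] hi[OF that(1)] top[OF that(1)] by (cases "th \<le> c"; cases "th \<le> d") auto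
  qed
  moreover have "s2 th Gov" if "th \<in> {0..1}" "th \<le> a" "s1 th = Gov" for th
    using low[OF that(1,2)] that(3) by simp
  ultimately show ?thesis by (auto simp: GL_def)
qed

lemma LSet: "{..a} \<inter> {0..1} = (GL \<union> MkL) \<inter> {0..1}"
proof -
  have "th \<in> GL \<union> MkL" if "0 \<le> th" "th \<le> 1" "th \<le> a" for th
    using lowGM[of th] that unfolding GL_def MkL_def by auto
  moreover have "GL \<union> MkL \<subseteq> {..a}" by (auto simp: GL_def MkL_def)
  ultimately show ?thesis by (auto; metis UnE)
qed


lemma mass_single: "mass f {x} = 0"
  unfolding mass_def by (rule null_integral) (use AE_lborel_singleton[of x] in \<open>auto elim: eventually_mono\<close>)

lemma lt_atMost: "0 < x \<Longrightarrow> x \<le> 1 \<Longrightarrow> mass f {..<x} = mass f {..x} \<and> num f {..<x} = num f {..x}"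
proof -
  assume x: "0 < x" "x \<le> 1"
  have "{..x} - {..<x} = {x}" by auto
  hence h: "mass f ({..x} - {..<x}) = 0" using mass_single by simp
  have sub: "{..<x} \<subseteq> {..x}" by auto
  show ?thesis using null_mod(1,2)[OF _ _ sub h] by simp
qed

lemma dens_le:
  assumes "0 < u" "u \<le> 1" "B \<in> sets lborel" "mass f B = 0"
    "\<And>th. 0 \<le> th \<Longrightarrow> th < u \<Longrightarrow> th \<notin> B \<Longrightarrow> th \<le> z"
  shows "u \<le> z"
proof (rule ccontr)
  assume "\<not> u \<le> z"
  hence "max 0 z < u" using assms by simp
  from exists_not_in[OF _ this assms(2-4)] obtain th where "max 0 z < th" "th < u" "th \<notin> B" by auto
  thus False using assms(5)[of th] by simp
qed

lemma bert1_contra: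
  assumes ac: "a = c" and x: "a < x" "x < th0" and pp: "p1 < x - S" "I \<le> x - S"
    and pl: "\<And>th. th \<in> {0..1} \<Longrightarrow> th \<le> a \<Longrightarrow> pay th = a + V qn"
  shows False
proof -
  define p' where "p' = x - S"
  have Vp: "V p' = x" using pp by (simp add: p'_def V_I)
  have x0: "0 < x" "x \<le> 1" using x a_pos th0 by auto
  have Y: "{th. V p' + cont I S qg qn Mkt th > pay th} \<inter> {0..1} = {..<x} \<inter> {0..1}"
  proof (rule set_eqI)
    fix th show "th \<in> {th. V p' + cont I S qg qn Mkt th > pay th} \<inter> {0..1} \<longleftrightarrow> th \<in> {..<x} \<inter> {0..1}"
    proof (cases "th \<in> {0..1}")
      case t: True
      have cm: "cont I S qg qn Mkt th = max th (V qn)" by (simp add: cont_def price2_def)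
      show ?thesis
      proof (cases "th \<le> a")
        case True
        thus ?thesis using pl[OF t True] lowF[OF t True] cm Vp x t by auto
      next
        case False
        hence "c < th" using ac by simp
        thus ?thesis using payHi[OF t] cm Vp t by auto
      qed
    qed auto
  qed
  have "0 < mass f {..x}" using Fpos x0 by auto
  moreover have "p' < cexp f {..x}" using Dlt[OF x0(1) x(2)] by (simp add: p'_def)
  ultimately have "0 < mass f {..x} * (cexp f {..x} - p')" by simp
  also have "mass f {..x} * (cexp f {..x} - p') = num f {..<x} - p' * mass f {..<x}"
    using lt_atMost[OF x0] num_eq[of "{..x}"] by (simp add: algebra_simps)
  also have "\<dots> = set_lebesgue_integral lborel ({..<x} \<inter> {0..1}) (\<lambda>t. (t - p') * f t)"
    by (rule integral_lin[symmetric]) simp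
  also have "\<dots> \<le> 0" using bert1[of p'] Y pp by (simp add: p'_def)
  finally show False by simp
qed

lemma bertG_contra:
  assumes ac: "a < c" and mG: "mass f GL = 0" and at: "a = th0"
  shows False
proof -
  define z where "z = a + min S (c - a) / 2"
  have z: "a < z" "z < c" "z < a + S" using ac S_pos by (auto simp: z_def min_def field_simps)
  define p' where "p' = z - S"
  have pa: "p0 = a - S" using p0_def th0(3) at by simp
  have pI: "I \<le> p'" using p0_I pa z by (simp add: p'_def)
  have Vp: "V p' = z" using pI by (simp add: p'_def V_I)
  have Vqg: "V qg \<le> a" by (rule le_limit[OF midF(1) ac])
  have qgp: "qg < p'"
  proof (cases "I \<le> qg")
    case True thus ?thesis using Vqg V_I[OF True] z by (simp add: p'_def)
  next
    case False thus ?thesis using pI p0_I pa z by (simp add: p'_def)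
  qed
  define A where "A = {a<..<z}"
  define B where "B = GL \<inter> {..<z} \<union> A"
  have mA: "A \<in> sets lborel" "B \<in> sets lborel" using mGL by (auto simp: A_def B_def)
  have c1: "c < 1" by (rule c_lt1)
  have X: "{th. s1 th = Gov \<and> V p' > th} \<inter> {0..1} = B \<inter> {0..1}"
  proof (rule set_eqI)
    fix th show "th \<in> {th. s1 th = Gov \<and> V p' > th} \<inter> {0..1} \<longleftrightarrow> th \<in> B \<inter> {0..1}"
    proof (cases "th \<in> {0..1}")
      case t: True
      consider "th \<le> a" | "a < th" "th \<le> c" | "c < th" by linarith
      thus ?thesis
      proof cases
        case 1 thus ?thesis using t z Vp by (auto simp: B_def A_def GL_def)
      next
        case 2 thus ?thesis using t z Vp mid[OF t 2] by (auto simp: B_def A_def GL_def)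
      next
        case 3
        have "s1 th = NoSale" using hi[OF t] top[OF t] 3 by (cases "th \<le> d") auto
        thus ?thesis using t z 3 by (auto simp: B_def A_def GL_def)
      qed
    qed auto
  qed
  have "B - A \<subseteq> GL" by (auto simp: B_def)
  hence "mass f (B - A) \<le> mass f GL" using mGL mA by (intro mass_mono) auto
  hence "mass f (B - A) = 0" using mG mass_nonneg[of "B - A"] mA by auto
  from null_mod[OF mA(1,2) _ this] have nm: "mass f A = mass f B" "num f A = num f B"
    by (auto simp: B_def)
  have mAp: "0 < mass f A" by (rule mass_pos_interval[of a z]) (use a_pos z c1 in \<open>auto simp: A_def\<close>)
  have "a < cexp f A" by (rule cexp_gt[OF mA(1) mAp]) (auto simp: A_def)
  hence "p' < cexp f A" using z by (simp add: p'_def)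
  hence "0 < mass f A * (cexp f A - p')" using mAp by simp
  also have "\<dots> = num f B - p' * mass f B" using nm num_eq[OF mA(1)] by (simp add: algebra_simps)
  also have "\<dots> = set_lebesgue_integral lborel (B \<inter> {0..1}) (\<lambda>t. (t - p') * f t)"
    by (rule integral_lin[symmetric, OF mA(2)])
  also have "\<dots> \<le> 0" using bertg[OF qgp] X by simp
  finally show False by simp
qed


lemma a_lt1: "a < 1" using ac c_lt1 by simp
lemma Fa: "0 < mass f {..a}" using Fpos a_pos a_lt1 by simp
lemma p0e: "p0 = th0 - S" using p0_def th0(3) by simp

lemma mL: "mass f {..a} = mass f GL + mass f MkL" "num f {..a} = num f GL + num f MkL"
  using cong01(1,2)[OF LSet] mass_Un[OF mGL mMkL dGM] by auto

lemma p1MkL: "0 < mass f MkL \<Longrightarrow> p1 = cexp f MkL"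
  using be(1) cong01[OF MkSet] by simp
lemma qgGL: "0 < mass f GL \<Longrightarrow> qg = cexp f GL"
  using be(2) cong01[OF G2Set] by simp

lemma GL_lt: "0 < mass f GL \<Longrightarrow> cexp f GL < a"
  by (rule cexp_lt[OF mGL]) (auto simp: GL_def)
lemma MkL_lt: "0 < mass f MkL \<Longrightarrow> cexp f MkL < a"
  by (rule cexp_lt[OF mMkL]) (auto simp: MkL_def)
lemma La_lt: "cexp f {..a} < a"
  by (rule cexp_lt[OF _ Fa]) auto

lemma nullGL: "mass f GL = 0 \<Longrightarrow> cexp f MkL = cexp f {..a} \<and> mass f MkL = mass f {..a}"
proof -
  assume m: "mass f GL = 0"
  have "(GL \<union> MkL) - MkL = GL" using dGM by auto
  hence h: "mass f ((GL \<union> MkL) - MkL) = 0" using m by simp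
  have U: "GL \<union> MkL \<in> sets lborel" using mGL mMkL by auto
  from null_mod[OF mMkL U Un_upper2 h] have "cexp f MkL = cexp f (GL \<union> MkL) \<and> mass f MkL = mass f (GL \<union> MkL)" by auto
  thus ?thesis using cong01[OF LSet] by simp
qed

lemma nullMkL: "mass f MkL = 0 \<Longrightarrow> cexp f GL = cexp f {..a} \<and> mass f GL = mass f {..a}"
proof -
  assume m: "mass f MkL = 0"
  have "(GL \<union> MkL) - GL = MkL" using dGM by auto
  hence h: "mass f ((GL \<union> MkL) - GL) = 0" using m by simp
  have U: "GL \<union> MkL \<in> sets lborel" using mGL mMkL by auto
  from null_mod[OF mGL U Un_upper1 h] have "cexp f GL = cexp f (GL \<union> MkL) \<and> mass f GL = mass f (GL \<union> MkL)" by auto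
  thus ?thesis using cong01[OF LSet] by simp
qed

lemma avg: "cexp f GL = v \<Longrightarrow> cexp f MkL = v \<Longrightarrow> cexp f {..a} = v"
proof -
  assume g: "cexp f GL = v" and m: "cexp f MkL = v"
  have "num f {..a} = mass f GL * v + mass f MkL * v" using mL(2) num_eq[OF mGL] num_eq[OF mMkL] g m by simp
  also have "\<dots> = mass f {..a} * v" using mL(1) by (simp add: algebra_simps)
  finally show ?thesis using Fa by (simp add: cexp_num)
qed

lemma a_th0: "cexp f {..a} = a - S \<Longrightarrow> a = th0" using uniq[of a] a_pos a_lt1 by simp

lemma VGL_dens: "mass f GL = 0 \<Longrightarrow> a \<le> V p1"
proof (rule dens_le[OF a_pos less_imp_le[OF a_lt1] mGL])
  fix th assume th: "0 \<le> th" "th < a" "th \<notin> GL"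
  hence t: "th \<in> {0..1}" "th \<le> a" using a_lt1 by auto
  have "s1 th = Mkt" using lowGM[OF t] th t by (auto simp: GL_def)
  thus "th \<le> V p1" using lowM(1)[OF t] by simp
qed

lemma VMkL_dens: "mass f MkL = 0 \<Longrightarrow> a \<le> V qg"
proof (rule dens_le[OF a_pos less_imp_le[OF a_lt1] mMkL])
  fix th assume th: "0 \<le> th" "th < a" "th \<notin> MkL"
  hence t: "th \<in> {0..1}" "th \<le> a" using a_lt1 by auto
  have "s1 th = Gov" using lowGM[OF t] th t by (auto simp: MkL_def)
  thus "th \<le> V qg" using lowG(1)[OF t] by simp
qed

lemma V_eq_lt: "V q = z \<Longrightarrow> q < z \<Longrightarrow> I \<le> q \<and> q = z - S"
proof -
  assume e: "V q = z" "q < z"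
  have "I \<le> q" proof (rule ccontr) assume "\<not> I \<le> q" thus False using e V_lt[of q I S] by simp qed
  thus ?thesis using e V_I[of I q S] by simp
qed

lemma caseA:
  assumes acs: "a < c"
  shows "a = th0 \<and> qn = pg \<and> qg = p0 \<and> 0 < mass f GL \<and> cexp f GL = p0 \<and>
         (0 < mass f MkL \<longrightarrow> p1 = p0 \<and> cexp f MkL = p0)"
proof -
  have "V qn \<le> pg + S" using midF(2)[of c] acs by simp
  hence qn: "qn = pg" using F2 by simp
  have Vqn: "V qn = pg + S" using qn F2 by simp
  have Vqg: "V qg \<le> a" by (rule le_limit[OF midF(1) acs])
  have Vp1: "V p1 \<le> a"
  proof (rule le_limit[OF _ acs])
    fix th assume "a < th" "th \<le> c"
    from midF(3)[OF this] Vqn show "V p1 \<le> th" by simp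
  qed
  show ?thesis
  proof (cases "mass f GL = 0")
    case True
    have nm: "cexp f MkL = cexp f {..a}" "mass f MkL = mass f {..a}" using nullGL[OF True] by auto
    hence mMkLp: "0 < mass f MkL" using Fa by simp
    have p1e: "p1 = cexp f {..a}" using p1MkL[OF mMkLp] nm by simp
    have "V p1 = a" using VGL_dens[OF True] Vp1 by simp
    from V_eq_lt[OF this] have "p1 = a - S" using p1e La_lt by simp
    hence "a = th0" using a_th0 p1e by simp
    from bertG_contra[OF acs True this] show ?thesis by simp
  next
    case False
    hence mGLp: "0 < mass f GL" using mass_nonneg[OF mGL] by simp
    have qge: "qg = cexp f GL" by (rule qgGL[OF mGLp])
    obtain tg where tg: "tg \<in> {0..1}" "tg \<in> GL" using nonempty_of_mass[OF mGLp] by auto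
    have tg': "tg \<le> a" "s1 tg = Gov" using tg by (auto simp: GL_def)
    have g2: "V p1 + V qn \<le> pg + S + V qg" by (rule lowG(2)[OF tg(1) tg'])
    have Vqga: "V qg = a"
    proof (rule ccontr)
      assume "V qg \<noteq> a"
      hence lt: "V qg < a" using Vqg by simp
      have a01: "a \<in> {0..1}" using a_pos a_lt1 by auto
      have "s1 a = Mkt" using lowGM[OF a01] lowG(1)[OF a01] lt by auto
      hence "a \<le> V p1" using lowM(1)[OF a01] by simp
      thus False using g2 Vqn lt by simp
    qed
    have qgv: "qg = a - S" using V_eq_lt[OF Vqga] qge GL_lt[OF mGLp] by simp
    show ?thesis
    proof (cases "mass f MkL = 0")
      case True
      have "cexp f GL = cexp f {..a}" using nullMkL[OF True] by simp
      hence at: "a = th0" using a_th0 qge qgv by simp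
      thus ?thesis using mGLp qge qgv p0e True qn by simp
    next
      case False
      hence mMkLp: "0 < mass f MkL" using mass_nonneg[OF mMkL] by simp
      have p1e: "p1 = cexp f MkL" by (rule p1MkL[OF mMkLp])
      obtain tm where tm: "tm \<in> {0..1}" "tm \<in> MkL" using nonempty_of_mass[OF mMkLp] by auto
      have tm': "tm \<le> a" "s1 tm = Mkt" using tm by (auto simp: MkL_def)
      have "pg + S + max tm (V qg) \<le> V p1 + V qn" by (rule lowM(2)[OF tm(1) tm'])
      hence "a \<le> V p1" using Vqga Vqn by (simp add: max_def split: if_splits)
      hence "V p1 = a" using Vp1 by simp
      hence p1v: "p1 = a - S" using V_eq_lt[of p1 a] p1e MkL_lt[OF mMkLp] by simp
      have "cexp f {..a} = a - S" by (rule avg) (use qge qgv p1e p1v in auto)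
      hence at: "a = th0" by (rule a_th0)
      thus ?thesis using mGLp qge qgv p1e p1v p0e qn by simp
    qed
  qed
qed


lemma caseB:
  assumes acs: "a = c"
  shows "a = th0 \<and> qn = pg \<and> qg = p0 \<and> 0 < mass f GL \<and> cexp f GL = p0 \<and>
         (0 < mass f MkL \<longrightarrow> p1 = p0 \<and> cexp f MkL = p0)"
proof -
  have Vp1: "V p1 \<le> a" using F3 acs by simp
  have qnF: "V qn = qn + S" "pg \<le> qn" "I \<le> qn" using F2 by auto
  show ?thesis
  proof (cases "mass f GL = 0")
    case True
    have nm: "cexp f MkL = cexp f {..a}" "mass f MkL = mass f {..a}" using nullGL[OF True] by auto
    hence mMkLp: "0 < mass f MkL" using Fa by simp
    have p1e: "p1 = cexp f {..a}" using p1MkL[OF mMkLp] nm by simp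
    have "V p1 = a" using VGL_dens[OF True] Vp1 by simp
    from V_eq_lt[OF this] have "p1 = a - S" using p1e La_lt by simp
    hence at: "a = th0" using a_th0 p1e by simp
    define e where "e = min d 1"
    have e: "c < e" "e \<le> 1" using ce by (auto simp: e_def)
    have qne: "qn = cexp f (MkL \<union> {c<..e})" using qnN by (simp add: e_def)
    define A where "A = MkL \<union> {c<..e}"
    define B where "B = GL \<union> MkL \<union> {c<..e}"
    have mAB: "A \<in> sets lborel" "B \<in> sets lborel" using mGL mMkL by (auto simp: A_def B_def)
    have "B - A \<subseteq> GL" by (auto simp: A_def B_def)
    hence "mass f (B - A) \<le> mass f GL" using mGL mAB by (intro mass_mono) auto
    hence "mass f (B - A) = 0" using True mass_nonneg[of "B - A"] mAB by auto
    from null_mod(3)[OF mAB _ this] have cAB: "cexp f A = cexp f B" by (auto simp: A_def B_def)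
    have "B \<inter> {0..1} = {..e} \<inter> {0..1}"
    proof -
      have "B \<inter> {0..1} = ((GL \<union> MkL) \<inter> {0..1}) \<union> ({c<..e} \<inter> {0..1})" by (auto simp: B_def)
      also have "\<dots> = ({..a} \<inter> {0..1}) \<union> ({c<..e} \<inter> {0..1})" using LSet by simp
      also have "\<dots> = {..e} \<inter> {0..1}" using acs e by auto
      finally show ?thesis .
    qed
    hence "cexp f B = cexp f {..e}" by (rule cong01(3))
    hence qne2: "qn = cexp f {..e}" using qne cAB by (simp add: A_def)
    show ?thesis
    proof (cases "d < 1")
      case True
      hence "e = d" by (simp add: e_def)
      hence "cexp f {..d} = d - S" using T1[OF True] qnF qne2 by simp
      moreover have "0 < d" using a_pos cutv by simp
      ultimately have "d = th0" using uniq[of d] True by metis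
      thus ?thesis using at acs delayed by simp
    next
      case False
      hence "e = 1" by (simp add: e_def)
      hence "qn < 1 - S" using Dgt[of 1] th0 qne2 by simp
      thus ?thesis using T2 False qnF by simp
    qed
  next
    case False
    hence mGLp: "0 < mass f GL" using mass_nonneg[OF mGL] by simp
    have qge: "qg = cexp f GL" by (rule qgGL[OF mGLp])
    obtain tg where tg: "tg \<in> {0..1}" "tg \<in> GL" using nonempty_of_mass[OF mGLp] by auto
    have tg': "tg \<le> a" "s1 tg = Gov" using tg by (auto simp: GL_def)
    have g2: "V p1 + V qn \<le> pg + S + V qg" by (rule lowG(2)[OF tg(1) tg'])
    have a01: "a \<in> {0..1}" using a_pos a_lt1 by auto
    show ?thesis
    proof (cases "mass f MkL = 0")
      case mMkL0: False
      hence mMkLp: "0 < mass f MkL" using mass_nonneg[OF mMkL] by simp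
      have p1e: "p1 = cexp f MkL" by (rule p1MkL[OF mMkLp])
      obtain tm where tm: "tm \<in> {0..1}" "tm \<in> MkL" using nonempty_of_mass[OF mMkLp] by auto
      have tm': "tm \<le> a" "s1 tm = Mkt" using tm by (auto simp: MkL_def)
      have "pg + S + max tm (V qg) \<le> V p1 + V qn" by (rule lowM(2)[OF tm(1) tm'])
      hence Eq: "V p1 + V qn = pg + S + V qg" using g2 by (simp add: max_def split: if_splits)
      have "a \<le> V p1"
      proof (cases "s1 a = Gov")
        case True thus ?thesis using lowG(3)[OF a01 _ True] Eq by simp
      next
        case False
        hence "s1 a = Mkt" using lowGM[OF a01] by simp
        thus ?thesis using lowM(1)[OF a01] by simp
      qed
      hence Vp1a: "V p1 = a" using Vp1 by simp
      hence p1v: "p1 = a - S" "I \<le> p1" using V_eq_lt[of p1 a] p1e MkL_lt[OF mMkLp] by auto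
      have Vqga: "V qg = a"
      proof (rule ccontr)
        assume ne: "V qg \<noteq> a"
        have "a \<le> V qg" using Eq Vp1a qnF by simp
        hence gt: "a < V qg" using ne by simp
        have qga: "qg < a" using GL_lt[OF mGLp] qge by simp
        have "I \<le> qg" proof (rule ccontr) assume "\<not> I \<le> qg" thus False using V_lt[of qg I S] gt qga by simp qed
        hence qgS: "a - S < qg" using V_I[of I qg S] gt by simp
        have "num f {..a} = mass f GL * qg + mass f MkL * (a - S)"
          using mL(2) num_eq[OF mGL] num_eq[OF mMkL] qge p1e p1v by simp
        also have "\<dots> > mass f GL * (a - S) + mass f MkL * (a - S)" using qgS mGLp by simp
        also have "mass f GL * (a - S) + mass f MkL * (a - S) = mass f {..a} * (a - S)"
          using mL(1) by (simp add: algebra_simps)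
        finally have "a - S < cexp f {..a}" using Fa by (simp add: cexp_num pos_less_divide_eq mult.commute)
        hence alt: "a < th0"
        proof -
          assume h: "a - S < cexp f {..a}"
          show "a < th0"
          proof (rule ccontr)
            assume "\<not> a < th0"
            hence "a = th0 \<or> th0 < a" by auto
            thus False
            proof
              assume "a = th0" thus False using h th0(3) by simp
            next
              assume "th0 < a" thus False using Dgt[of a] a_lt1 h by simp
            qed
          qed
        qed
        show False
        proof (rule bert1_contra[OF acs, of "(a + th0) / 2"])
          show "a < (a + th0) / 2" "(a + th0) / 2 < th0" using alt by auto
          show "p1 < (a + th0) / 2 - S" "I \<le> (a + th0) / 2 - S" using p1v alt by (simp_all add: field_simps)
          fix th assume t: "th \<in> {0..1}" "th \<le> a"
          show "pay th = a + V qn"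
          proof (cases "s1 th = Gov")
            case True thus ?thesis using payG[OF True] low[OF t] Eq Vp1a by simp
          next
            case False
            hence "s1 th = Mkt" using lowGM[OF t] by simp
            thus ?thesis using lowM(3)[OF t] Vp1a by simp
          qed
        qed
      qed
      have qgv: "qg = a - S" using V_eq_lt[OF Vqga] qge GL_lt[OF mGLp] by simp
      have "V qn = pg + S" using Eq Vp1a Vqga by simp
      hence qn: "qn = pg" using qnF by simp
      have "cexp f {..a} = a - S" by (rule avg) (use qge qgv p1e p1v in auto)
      hence at: "a = th0" by (rule a_th0)
      thus ?thesis using mGLp qge qgv p1e p1v p0e qn by simp
    next
      case mMkL0: True
      have nm: "cexp f GL = cexp f {..a}" using nullMkL[OF mMkL0] by simp
      have qgL: "qg = cexp f {..a}" using qge nm by simp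
      have aVqg: "a \<le> V qg" by (rule VMkL_dens[OF mMkL0])
      have qga: "qg < a" using La_lt qgL by simp
      have qgI: "I \<le> qg" proof (rule ccontr) assume "\<not> I \<le> qg" thus False using V_lt[of qg I S] aVqg qga by simp qed
      hence VqgS: "V qg = qg + S" by (simp add: V_I)
      have ath: "a \<le> th0"
      proof (rule ccontr)
        assume "\<not> a \<le> th0"
        hence "cexp f {..a} < a - S" using Dgt[of a] a_lt1 by simp
        thus False using qgL aVqg VqgS by simp
      qed
      have E1: "a + V qn \<le> pg + S + V qg"
      proof -
        have "a \<le> pg + S + V qg - V qn"
        proof (rule dens_le[OF a_pos less_imp_le[OF a_lt1] mMkL mMkL0])
          fix th assume th: "0 \<le> th" "th < a" "th \<notin> MkL"
          hence t: "th \<in> {0..1}" "th \<le> a" using a_lt1 by auto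
          have "s1 th = Gov" using lowGM[OF t] th t by (auto simp: MkL_def)
          thus "th \<le> pg + S + V qg - V qn" using lowG(3)[OF t] by simp
        qed
        thus ?thesis by simp
      qed
      have Eq: "pg + S + V qg = a + V qn" using E1 F4 acs by simp
      have at: "a = th0"
      proof (rule ccontr)
        assume "a \<noteq> th0"
        hence alt: "a < th0" using ath by simp
        have "qg < cexp f {..th0}" using cexp_strict_mono[of a th0] alt a_pos th0 qgL by simp
        hence Ith: "I + S < th0" using qgI th0(3) by simp
        define x where "x = max ((a + th0) / 2) ((I + S + th0) / 2)"
        have x: "a < x" "x < th0" "I < x - S" using alt Ith by (auto simp: x_def max_def field_simps)
        show False
        proof (rule bert1_contra[OF acs x(1,2)])
          show "p1 < x - S"
          proof (cases "I \<le> p1")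
            case True thus ?thesis using Vp1 V_I[OF True] x by simp
          next
            case False thus ?thesis using x by simp
          qed
          show "I \<le> x - S" using x by simp
          fix th assume t: "th \<in> {0..1}" "th \<le> a"
          show "pay th = a + V qn"
          proof (cases "s1 th = Gov")
            case True thus ?thesis using payG[OF True] low[OF t] Eq by simp
          next
            case False
            hence m: "s1 th = Mkt" using lowGM[OF t] by simp
            have "pg + S + max th (V qg) \<le> V p1 + V qn" by (rule lowM(2)[OF t m])
            hence "a + V qn \<le> V p1 + V qn" using Eq by (simp add: max_def split: if_splits)
            thus ?thesis using lowM(3)[OF t m] Vp1 by simp
          qed
        qed
      qed
      have qgp: "qg = p0" using qgL at p0_def by simp
      have "V qg = a" using VqgS qgp p0e at by simp
      hence "V qn = pg + S" using Eq by simp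
      hence qn: "qn = pg" using qnF by simp
      show ?thesis using at qn qgp mGLp qge mMkL0 by simp
    qed
  qed
qed

end

theorem theorem4:
  fixes f :: "real \<Rightarrow> real" and I S pg th0 p0 :: real
    and s1 :: "real \<Rightarrow> act1" and s2 :: "real \<Rightarrow> act1 \<Rightarrow> bool"
    and p1 qg qn th_hat th_g th2 :: real
  assumes f_meas: "f \<in> borel_measurable lborel"
    and f_int: "set_integrable lborel {0..1} f"
    and f_pos: "\<forall>x\<in>{0..1}. f x > 0"
    and f_total: "set_lebesgue_integral lborel {0..1} f = 1"
    and f_logconc: "strictly_log_concave_on {0..1} f"
    and f_mono: "\<forall>b\<in>{0<..1}. strict_mono_on {0<..<b} (\<lambda>a. 2 * cexp f {a<..<b} - cexp f {..a})"
    and I_pos: "0 < I" and S_pos: "0 < S"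
    and th0: "0 < th0" "th0 < 1" "th0 - S = cexp f {..th0}"
    and th0_unique: "\<forall>x\<in>{0<..<1}. x - S = cexp f {..x} \<longrightarrow> x = th0"
    and p0_def: "p0 = cexp f {..th0}"
    and p0_I: "I \<le> p0"
    and pg: "p0 < pg" "pg < 1 - S"
    and eq: "transparent_eq f I S pg s1 s2 p1 qg qn"
    and cut: "has_cutoffs s1 s2 th_hat th_g th2"
    and delayed: "th_g < th2"
  shows "th_hat = th0 \<and> th0 \<le> th_g \<and> th_g < pg + S \<and> th2 = pg + S \<and>
    \<comment> \<open>(i)\<close>
    (\<forall>th\<in>{0..th0}. sells1 s1 th \<and> sells2 s1 s2 th) \<and>
    mass f {th. th \<le> th0 \<and> s1 th = Gov} > 0 \<and>
    \<comment> \<open>(ii)\<close>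
    (mass f {th. th \<le> th0 \<and> s1 th = Mkt} > 0 \<longrightarrow>
       p1 = p0 \<and> qn = pg \<and> cexp f {th. th \<le> th0 \<and> s1 th = Mkt} = p0) \<and>
    qg = p0 \<and> cexp f {th. th \<le> th0 \<and> s1 th = Gov} = p0 \<and>
    \<comment> \<open>(iii)\<close>
    (\<forall>th\<in>{0..1}. th0 < th \<and> th \<le> th_g \<longrightarrow> s1 th = Gov \<and> \<not> sells2 s1 s2 th) \<and>
    \<comment> \<open>(iv)\<close>
    (\<forall>th\<in>{0..1}. th_g < th \<and> th \<le> pg + S \<longrightarrow> \<not> sells1 s1 th \<and> sells2 s1 s2 th) \<and>
    qn = pg \<and>
    (\<forall>th\<in>{0..1}. pg + S < th \<longrightarrow> \<not> sells1 s1 th \<and> \<not> sells2 s1 s2 th)"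
  proof -
  interpret model f I S pg th0 p0 s1 s2 p1 qg qn th_hat th_g th2
    by unfold_locales (fact assms)+
  have M: "th_hat = th0 \<and> qn = pg \<and> qg = p0 \<and> 0 < mass f GL \<and> cexp f GL = p0 \<and>
         (0 < mass f MkL \<longrightarrow> p1 = p0 \<and> cexp f MkL = p0)"
  proof (cases "th_hat < th_g")
    case True thus ?thesis by (rule caseA)
  next
    case False thus ?thesis using ac by (intro caseB) simp
  qed
  hence at: "th_hat = th0" and qn: "qn = pg" by auto
  have Vqn: "V qn = pg + S" using F2 qn by simp
  have cg: "th_g < pg + S" using F5 Vqn by simp
  have d: "th2 = pg + S"
  proof (cases "th2 < 1")
    case True thus ?thesis using T1 Vqn by simp
  next
    case False thus ?thesis using T2 Vqn pg by simp
  qed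
  have i: "\<forall>th\<in>{0..th0}. sells1 s1 th \<and> sells2 s1 s2 th"
  proof
    fix th assume "th \<in> {0..th0}"
    hence t: "th \<in> {0..1}" "th \<le> th_hat" using at th0 by auto
    show "sells1 s1 th \<and> sells2 s1 s2 th" using low[OF t] by (simp add: sells1_def sells2_def)
  qed
  have GLe: "GL = {th. th \<le> th0 \<and> s1 th = Gov}" "MkL = {th. th \<le> th0 \<and> s1 th = Mkt}"
    unfolding GL_def MkL_def using at by auto
  have iii: "\<forall>th\<in>{0..1}. th0 < th \<and> th \<le> th_g \<longrightarrow> s1 th = Gov \<and> \<not> sells2 s1 s2 th"
    using mid at by (auto simp: sells2_def)
  have iv: "\<forall>th\<in>{0..1}. th_g < th \<and> th \<le> pg + S \<longrightarrow> \<not> sells1 s1 th \<and> sells2 s1 s2 th"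
    using hi d by (auto simp: sells1_def sells2_def)
  have v: "\<forall>th\<in>{0..1}. pg + S < th \<longrightarrow> \<not> sells1 s1 th \<and> \<not> sells2 s1 s2 th"
    using top d by (auto simp: sells1_def sells2_def)
  show ?thesis using M GLe at ac cg d i iii iv v qn by simp
qed

end
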